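(* For every $n$, the map of $n$-globular sets $\pi\colon D^s_n\to\mathrm{pd}_n$ is surjective: for every $k\le n$ and every globular $k$-pasting diagram $P$ there is a simple $k$-string diagram $D$ with $\pi(D)=P$.
   Context: Write $\langle\ell\rangle=\{1<\dots<\ell\}$. A $k$-stage level tree with crossings is a diagram $X_k\xrightarrow{v^k}\cdots\xrightarrow{v^2}X_1\xrightarrow{v^1}\langle1\rangle$ of finite totally ordered sets and arbitrary functions; it is a $k$-stage level tree if all $v^i$ are order preserving. A simple $k$-string diagram is a $k$-stage level tree with crossings with $X_i=\langle\ell_i\rangle$ for all $i$; a globular $k$-pasting diagram is a $k$-stage level tree with $X_i=\langle\ell_i\rangle$. $D^s_n(k)$ and $\mathrm{pd}_n(k)$ ($k\le n$) denote the sets of these, made into $n$-globular sets with source and target both given by truncation. For a $k$-stage level tree with crossings $X$, define $\overline{X}$ as the same diagram of sets with new orders: $\overline{X}_1=X_1$, and $\overline{X}_{i+1}$ has the unique total order making $v^{i+1}\times\mathrm{id}\colon\overline{X}_{i+1}\to\overline{X}_i\times X_{i+1}$ order preserving, where the target has the lexicographic order ($(a,b)\le(a',b')$ iff $a<a'$, or $a=a'$ and $b\le b'$). Then $\overline{X}$ is a $k$-stage level tree. For a simple $k$-string diagram $D$, $\pi(D)$ is the unique globular $k$-pasting diagram isomorphic (via levelwise order-preserving bijections commuting with the maps) to $\overline{D}$. *)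

theory Defs
  imports Main
begin

text \<open>A k-stage diagram with levels X_i = <l_i> = {1..l_i} (i = 1..k) and
  X_0 = <1> is a list ds of length k; ds!(i-1) is the list [v^i(1), ..., v^i(l_i)],
  so l_i = length (ds!(i-1)). Level j (0-indexed) of the list is level j+1 of the diagram.\<close>

definition level_size :: "nat list list \<Rightarrow> nat \<Rightarrow> nat" where
  "level_size ds j = length (ds ! j)"

definition cod_size :: "nat list list \<Rightarrow> nat \<Rightarrow> nat" where
  "cod_size ds j = (if j = 0 then 1 else length (ds ! (j - 1)))"

text \<open>The map v^(j+1) : X_(j+1) \<rightarrow> X_j as a function on {1..l_(j+1)}.\<close>
definition vmap :: "nat list list \<Rightarrow> nat \<Rightarrow> nat \<Rightarrow> nat" where
  "vmap ds j x = ds ! j ! (x - 1)"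

definition simple_string_diagram :: "nat \<Rightarrow> nat list list \<Rightarrow> bool" where
  "simple_string_diagram k ds \<longleftrightarrow> length ds = k \<and>
     (\<forall>j<k. set (ds ! j) \<subseteq> {1..cod_size ds j})"

definition pasting_diagram :: "nat \<Rightarrow> nat list list \<Rightarrow> bool" where
  "pasting_diagram k ds \<longleftrightarrow> simple_string_diagram k ds \<and> (\<forall>j<k. sorted (ds ! j))"

text \<open>The order of \<open>overline X\<close> at list position j: the usual order at level 1, and at the
  next level the order pulled back along v \<times> id from the lexicographic order on
  overline X_i \<times> X_(i+1).\<close>
fun ovl_le :: "nat list list \<Rightarrow> nat \<Rightarrow> nat \<Rightarrow> nat \<Rightarrow> bool" where
  "ovl_le ds 0 x y = (x \<le> y)"
| "ovl_le ds (Suc j) x y =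
     ((ovl_le ds j (vmap ds (Suc j) x) (vmap ds (Suc j) y) \<and> vmap ds (Suc j) x \<noteq> vmap ds (Suc j) y)
      \<or> (vmap ds (Suc j) x = vmap ds (Suc j) y \<and> x \<le> y))"

text \<open>f is an isomorphism from overline ds to P: levelwise order-preserving bijections
  (f j on level j+1; on X_0 = <1> the identity) commuting with the maps.\<close>
definition ovl_iso :: "nat list list \<Rightarrow> nat list list \<Rightarrow> (nat \<Rightarrow> nat \<Rightarrow> nat) \<Rightarrow> bool" where
  "ovl_iso ds P f \<longleftrightarrow> length P = length ds \<and>
     (\<forall>j<length ds. level_size P j = level_size ds j \<and>
        bij_betw (f j) {1..level_size ds j} {1..level_size P j} \<and>
        (\<forall>x\<in>{1..level_size ds j}. \<forall>y\<in>{1..level_size ds j}.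
            ovl_le ds j x y \<longleftrightarrow> f j x \<le> f j y) \<and>
        (\<forall>x\<in>{1..level_size ds j}.
            vmap P j (f j x) = (if j = 0 then vmap ds j x else f (j - 1) (vmap ds j x))))"

definition pi_sd :: "nat list list \<Rightarrow> nat list list" where
  "pi_sd ds = (THE P. pasting_diagram (length ds) P \<and> (\<exists>f. ovl_iso ds P f))"

end

theory Submission
  imports Defs
begin

lemma vmap_range:
  assumes "pasting_diagram k P" "j < k" "x \<in> {1..level_size P j}"
  shows "vmap P j x \<in> {1..cod_size P j}"
proof -
  have "P ! j ! (x - 1) \<in> set (P ! j)" using assms(3) by (auto simp: level_size_def)
  moreover have "set (P ! j) \<subseteq> {1..cod_size P j}" using assms(1,2) by (simp add: pasting_diagram_def simple_string_diagram_def)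
  ultimately show ?thesis unfolding vmap_def by blast
qed

lemma vmap_mono:
  assumes "pasting_diagram k P" "j < k" "x \<in> {1..level_size P j}" "y \<in> {1..level_size P j}" "x \<le> y"
  shows "vmap P j x \<le> vmap P j y"
proof -
  have "sorted (P ! j)" using assms(1,2) by (auto simp: pasting_diagram_def)
  thus ?thesis using assms(3-5) unfolding vmap_def level_size_def
    by (intro sorted_nth_mono) auto
qed

lemma ovl_le_sorted:
  assumes "pasting_diagram k P"
  shows "j < k \<Longrightarrow> x \<in> {1..level_size P j} \<Longrightarrow> y \<in> {1..level_size P j} \<Longrightarrow> ovl_le P j x y = (x \<le> y)"
proof (induction j arbitrary: x y)
  case 0
  then show ?case by simp
next
  case (Suc j)
  have r: "vmap P (Suc j) z \<in> {1..level_size P j}" if "z \<in> {1..level_size P (Suc j)}" for z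
    using vmap_range[OF assms Suc.prems(1) that] by (simp add: cod_size_def level_size_def)
  have IH: "ovl_le P j (vmap P (Suc j) x) (vmap P (Suc j) y) = (vmap P (Suc j) x \<le> vmap P (Suc j) y)"
    using Suc.IH[OF _ r[OF Suc.prems(2)] r[OF Suc.prems(3)]] Suc.prems(1) by simp
  have m1: "x \<le> y \<Longrightarrow> vmap P (Suc j) x \<le> vmap P (Suc j) y"
    using vmap_mono[OF assms Suc.prems(1-3)] by simp
  have m2: "y \<le> x \<Longrightarrow> vmap P (Suc j) y \<le> vmap P (Suc j) x"
    using vmap_mono[OF assms Suc.prems(1) Suc.prems(3) Suc.prems(2)] by simp
  show ?case using IH m1 m2 by (cases "x \<le> y") auto
qed

lemma mono_bij_id:
  assumes "bij_betw f {1..n::nat} {1..n}"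
    and "\<forall>x\<in>{1..n}. \<forall>y\<in>{1..n}. x \<le> y \<longleftrightarrow> f x \<le> f y"
    and "x \<in> {1..n}"
  shows "f x = x"
proof -
  have inj: "inj_on f {1..n}" and img: "f ` {1..n} = {1..n}" using assms(1) by (auto simp: bij_betw_def)
  have sub1: "f ` {1..x} \<subseteq> {1..f x}"
  proof
    fix z assume "z \<in> f ` {1..x}"
    then obtain y where y: "y \<in> {1..x}" "z = f y" by blast
    have yn: "y \<in> {1..n}" using y assms(3) by simp
    hence "f y \<in> {1..n}" using img by blast
    moreover have "y \<le> x" using y by simp
    hence "f y \<le> f x" using assms(2)[rule_format, OF yn assms(3)] by simp
    ultimately show "z \<in> {1..f x}" using y by simp
  qed
  have inj1: "inj_on f {1..x}" by (rule inj_on_subset[OF inj]) (use assms(3) in simp)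
  have "card (f ` {1..x}) \<le> card {1..f x}" using sub1 by (intro card_mono) simp_all
  hence "card {1..x} \<le> card {1..f x}" using card_image[OF inj1] by simp
  hence a: "x \<le> f x" by simp
  have sub2: "f ` {x..n} \<subseteq> {f x..n}"
  proof
    fix z assume "z \<in> f ` {x..n}"
    then obtain y where y: "y \<in> {x..n}" "z = f y" by blast
    have yn: "y \<in> {1..n}" using y assms(3) by simp
    hence "f y \<in> {1..n}" using img by blast
    moreover have "x \<le> y" using y by simp
    hence "f x \<le> f y" using assms(2)[rule_format, OF assms(3) yn] by simp
    ultimately show "z \<in> {f x..n}" using y by simp
  qed
  have inj2: "inj_on f {x..n}" by (rule inj_on_subset[OF inj]) (use assms(3) in auto)
  have "card (f ` {x..n}) \<le> card {f x..n}" using sub2 by (intro card_mono) simp_all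
  hence "card {x..n} \<le> card {f x..n}" using card_image[OF inj2] by simp
  moreover have "f x \<in> {1..n}" using img assms(3) by blast
  ultimately have "f x \<le> x" using assms(3) a by simp
  thus ?thesis using a by simp
qed

lemma list_eq_by_vmap:
  assumes "length a = length b" "\<forall>x\<in>{1..length a}. a ! (x - 1) = b ! (x - 1)"
  shows "a = b"
proof (rule nth_equalityI)
  show "length a = length b" by fact
  fix i assume "i < length a"
  thus "a ! i = b ! i" using assms(2)[rule_format, of "Suc i"] by auto
qed

theorem mainTheorem3:
  fixes n k :: nat and P :: "nat list list"
  assumes "k \<le> n" and "pasting_diagram k P"
  shows "\<exists>D. simple_string_diagram k D \<and> pi_sd D = P"
proof (intro exI conjI)
  have lenP: "length P = k" using assms(2) by (simp add: pasting_diagram_def simple_string_diagram_def)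
  show "simple_string_diagram k P" using assms(2) by (simp add: pasting_diagram_def)
  show "pi_sd P = P" unfolding pi_sd_def
  proof (rule the_equality)
    show "pasting_diagram (length P) P \<and> (\<exists>f. ovl_iso P P f)"
    proof (intro conjI exI)
      show "pasting_diagram (length P) P" using assms(2) lenP by simp
      show "ovl_iso P P (\<lambda>j x. x)" unfolding ovl_iso_def
        using ovl_le_sorted[OF assms(2)] lenP by (auto simp: bij_betw_def)
    qed
  next
    fix Q assume "pasting_diagram (length P) Q \<and> (\<exists>f. ovl_iso P Q f)"
    then obtain g where g: "ovl_iso P Q g" by blast
    have lenQ: "length Q = length P" using g by (simp add: ovl_iso_def)
    have gid: "g j x = x" if "j < k" "x \<in> {1..level_size P j}" for j x
    proof (rule mono_bij_id[of "g j" "level_size P j"])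
      show "bij_betw (g j) {1..level_size P j} {1..level_size P j}"
        using g that lenP unfolding ovl_iso_def by metis
      show "\<forall>x\<in>{1..level_size P j}. \<forall>y\<in>{1..level_size P j}. (x \<le> y) = (g j x \<le> g j y)"
        using g that lenP ovl_le_sorted[OF assms(2) that(1)] by (auto simp: ovl_iso_def)
    qed fact
    show "Q = P"
    proof (rule nth_equalityI)
      show "length Q = length P" by fact
      fix j assume j: "j < length Q"
      hence jk: "j < k" using lenQ lenP by simp
      have ls: "level_size Q j = level_size P j" using g j lenQ by (simp add: ovl_iso_def)
      have "vmap Q j x = vmap P j x" if x: "x \<in> {1..level_size P j}" for x
      proof -
        have "vmap Q j (g j x) = (if j = 0 then vmap P j x else g (j - 1) (vmap P j x))"
          using g j lenQ x by (simp add: ovl_iso_def)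
        moreover have "g j x = x" using gid jk x by simp
        moreover have "j \<noteq> 0 \<Longrightarrow> g (j - 1) (vmap P j x) = vmap P j x"
        proof -
          assume "j \<noteq> 0"
          have "vmap P j x \<in> {1..cod_size P j}" using vmap_range[OF assms(2) jk x] .
          hence "vmap P j x \<in> {1..level_size P (j - 1)}" using `j \<noteq> 0` by (simp add: cod_size_def level_size_def)
          thus ?thesis using gid jk by simp
        qed
        ultimately show ?thesis by auto
      qed
      thus "Q ! j = P ! j" using ls
        by (intro list_eq_by_vmap) (auto simp: vmap_def level_size_def)
    qed
  qed
qed

end
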